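(* Let $R_1$ and $R_2$ be finite commutative local principal ideal rings with unity, and let $R=R_1\times R_2$. Suppose $\operatorname{diam}(\Gamma(R_1))\in\{1,2\}$ and $\operatorname{diam}(\Gamma(R_2))=2$. Then $\overline{\Gamma(R)}$ is not a divisor graph.
   Context: For a commutative ring $S$ with unity, $Z(S)$ denotes its set of zero divisors. The zero divisor graph $\Gamma(S)$ is the simple graph with vertex set $Z(S)\setminus\{0\}$, distinct $a,b$ adjacent iff $ab=0$; its complement $\overline{\Gamma(S)}$ has the same vertex set with distinct $a,b$ adjacent iff $ab\neq 0$. The diameter of a graph is the maximum distance (number of edges in a shortest path) between pairs of vertices. A ring is local if it has a unique maximal ideal. For a nonempty set $T$ of positive integers, the divisor graph $G(T)$ has vertex set $T$, with distinct $i,j$ adjacent iff $i\mid j$ or $j\mid i$; a graph is a divisor graph if it is isomorphic to some $G(T)$. *)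

theory Defs
  imports "HOL-Algebra.Algebra" "HOL-Library.Extended_Nat"
begin

definition local_ring :: "('a, 'm) ring_scheme \<Rightarrow> bool" where
  "local_ring R \<longleftrightarrow> (\<exists>!M. maximalideal M R)"

definition principal_ideal_ring :: "('a, 'm) ring_scheme \<Rightarrow> bool" where
  "principal_ideal_ring R \<longleftrightarrow> (\<forall>I. ideal I R \<longrightarrow> principalideal I R)"

definition zero_divisors :: "('a, 'm) ring_scheme \<Rightarrow> 'a set" where
  "zero_divisors R = {a \<in> carrier R. \<exists>b \<in> carrier R. b \<noteq> \<zero>\<^bsub>R\<^esub> \<and> a \<otimes>\<^bsub>R\<^esub> b = \<zero>\<^bsub>R\<^esub>}"

text \<open>Simple graphs given by a vertex set and an adjacency predicate
  (only its values on distinct vertices of the vertex set matter).\<close>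

definition zd_graph_verts :: "('a, 'm) ring_scheme \<Rightarrow> 'a set" where
  "zd_graph_verts R = zero_divisors R - {\<zero>\<^bsub>R\<^esub>}"

definition zd_adj :: "('a, 'm) ring_scheme \<Rightarrow> 'a \<Rightarrow> 'a \<Rightarrow> bool" where
  "zd_adj R a b \<longleftrightarrow> a \<noteq> b \<and> a \<otimes>\<^bsub>R\<^esub> b = \<zero>\<^bsub>R\<^esub>"

definition zd_comp_adj :: "('a, 'm) ring_scheme \<Rightarrow> 'a \<Rightarrow> 'a \<Rightarrow> bool" where
  "zd_comp_adj R a b \<longleftrightarrow> a \<noteq> b \<and> a \<otimes>\<^bsub>R\<^esub> b \<noteq> \<zero>\<^bsub>R\<^esub>"

definition is_walk :: "'v set \<Rightarrow> ('v \<Rightarrow> 'v \<Rightarrow> bool) \<Rightarrow> 'v list \<Rightarrow> bool" where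
  "is_walk V E xs \<longleftrightarrow> xs \<noteq> [] \<and> set xs \<subseteq> V \<and>
     (\<forall>i. Suc i < length xs \<longrightarrow> E (xs ! i) (xs ! Suc i) \<and> xs ! i \<noteq> xs ! Suc i)"

definition graph_dist :: "'v set \<Rightarrow> ('v \<Rightarrow> 'v \<Rightarrow> bool) \<Rightarrow> 'v \<Rightarrow> 'v \<Rightarrow> enat" where
  "graph_dist V E u v = (INF xs \<in> {xs. is_walk V E xs \<and> hd xs = u \<and> last xs = v}.
                          enat (length xs - 1))"

definition graph_diam :: "'v set \<Rightarrow> ('v \<Rightarrow> 'v \<Rightarrow> bool) \<Rightarrow> enat" where
  "graph_diam V E = (SUP u \<in> V. SUP v \<in> V. graph_dist V E u v)"

definition is_divisor_graph :: "'v set \<Rightarrow> ('v \<Rightarrow> 'v \<Rightarrow> bool) \<Rightarrow> bool" where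
  "is_divisor_graph V E \<longleftrightarrow>
     (\<exists>(T :: nat set) f. T \<noteq> {} \<and> (\<forall>t \<in> T. 0 < t) \<and> bij_betw f V T \<and>
        (\<forall>a \<in> V. \<forall>b \<in> V. a \<noteq> b \<longrightarrow> (E a b \<longleftrightarrow> (f a dvd f b \<or> f b dvd f a))))"

end

theory Submission
  imports Defs
begin

lemma RDP_mult: "(a,b) \<otimes>\<^bsub>RDirProd R S\<^esub> (c,d) = (a \<otimes>\<^bsub>R\<^esub> c, b \<otimes>\<^bsub>S\<^esub> d)"
  by (simp add: RDirProd_def DirProd_def monoid.defs)

lemma RDP_zero: "\<zero>\<^bsub>RDirProd R S\<^esub> = (\<zero>\<^bsub>R\<^esub>, \<zero>\<^bsub>S\<^esub>)"
  by (simp add: RDirProd_def DirProd_def monoid.defs)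

lemma diam_nonempty: assumes "graph_diam V E \<noteq> 0" shows "V \<noteq> {}"
  using assms unfolding graph_diam_def by (auto simp: bot_enat_def)

lemma obstr:
  fixes a0 a1 a2 a3 a4 a5 a6 :: nat
  assumes e01: "a0 dvd a1 \<or> a1 dvd a0" and e02: "a0 dvd a2 \<or> a2 dvd a0"
    and e03: "a0 dvd a3 \<or> a3 dvd a0"
    and e04: "a0 dvd a4 \<or> a4 dvd a0" and e05: "a0 dvd a5 \<or> a5 dvd a0"
    and e12: "a1 dvd a2 \<or> a2 dvd a1" and e13: "a1 dvd a3 \<or> a3 dvd a1"
    and e14: "a1 dvd a4 \<or> a4 dvd a1"
    and e23: "a2 dvd a3 \<or> a3 dvd a2" and e25: "a2 dvd a5 \<or> a5 dvd a2"
    and e26: "a2 dvd a6 \<or> a6 dvd a2"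
    and e35: "a3 dvd a5 \<or> a5 dvd a3" and e56: "a5 dvd a6 \<or> a6 dvd a5"
    and n06: "\<not> (a0 dvd a6 \<or> a6 dvd a0)" and n15: "\<not> (a1 dvd a5 \<or> a5 dvd a1)"
    and n16: "\<not> (a1 dvd a6 \<or> a6 dvd a1)"
    and n24: "\<not> (a2 dvd a4 \<or> a4 dvd a2)" and n34: "\<not> (a3 dvd a4 \<or> a4 dvd a3)"
    and n36: "\<not> (a3 dvd a6 \<or> a6 dvd a3)"
    and n45: "\<not> (a4 dvd a5 \<or> a5 dvd a4)" and n46: "\<not> (a4 dvd a6 \<or> a6 dvd a4)"
  shows False
proof (cases "a0 dvd a4")
  case True
  have "a0 dvd a2" using e02 n24 True dvd_trans by blast
  have "a0 dvd a5" using e05 n45 True dvd_trans by blast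
  have "a6 dvd a2" using e26 n06 \<open>a0 dvd a2\<close> dvd_trans by blast
  have "a6 dvd a5" using e56 n06 \<open>a0 dvd a5\<close> dvd_trans by blast
  have "a1 dvd a2" using e12 n16 \<open>a6 dvd a2\<close> dvd_trans by blast
  have "a3 dvd a5" using e35 n36 \<open>a6 dvd a5\<close> dvd_trans by blast
  have "a1 dvd a3" using e23 e13 n34 n24 e14 \<open>a1 dvd a2\<close> dvd_trans by blast
  then show False using n15 \<open>a3 dvd a5\<close> dvd_trans by blast
next
  case False
  then have "a4 dvd a0" using e04 by blast
  have "a2 dvd a0" using e02 n24 \<open>a4 dvd a0\<close> dvd_trans by blast
  have "a5 dvd a0" using e05 n45 \<open>a4 dvd a0\<close> dvd_trans by blast
  have "a2 dvd a6" using e26 n06 \<open>a2 dvd a0\<close> dvd_trans by blast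
  have "a5 dvd a6" using e56 n06 \<open>a5 dvd a0\<close> dvd_trans by blast
  have "a2 dvd a1" using e12 n16 \<open>a2 dvd a6\<close> dvd_trans by blast
  have "a5 dvd a3" using e35 n36 \<open>a5 dvd a6\<close> dvd_trans by blast
  have "a3 dvd a1" using e23 e13 n34 n24 e14 \<open>a2 dvd a1\<close> dvd_trans by blast
  then show False using n15 \<open>a5 dvd a3\<close> dvd_trans by blast
qed

lemma inV:
  assumes "a \<in> carrier R" "b \<in> carrier S" "c \<in> carrier R" "d \<in> carrier S"
    "(c,d) \<noteq> (\<zero>\<^bsub>R\<^esub>,\<zero>\<^bsub>S\<^esub>)" "a \<otimes>\<^bsub>R\<^esub> c = \<zero>\<^bsub>R\<^esub>" "b \<otimes>\<^bsub>S\<^esub> d = \<zero>\<^bsub>S\<^esub>"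
    "(a,b) \<noteq> (\<zero>\<^bsub>R\<^esub>,\<zero>\<^bsub>S\<^esub>)"
  shows "(a,b) \<in> zd_graph_verts (RDirProd R S)"
  using assms unfolding zd_graph_verts_def zero_divisors_def
  by (auto simp: RDirProd_carrier RDP_mult RDP_zero)

theorem theorem2p6:
  fixes R1 :: "('a, 'm) ring_scheme" and R2 :: "('b, 'n) ring_scheme"
  assumes "cring R1" and "cring R2"
    and "finite (carrier R1)" and "finite (carrier R2)"
    and "local_ring R1" and "local_ring R2"
    and "principal_ideal_ring R1" and "principal_ideal_ring R2"
    and "graph_diam (zd_graph_verts R1) (zd_adj R1) \<in> {1, 2}"
    and "graph_diam (zd_graph_verts R2) (zd_adj R2) = 2"
  shows "\<not> is_divisor_graph (zd_graph_verts (RDirProd R1 R2)) (zd_comp_adj (RDirProd R1 R2))"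
proof
  assume dg: "is_divisor_graph (zd_graph_verts (RDirProd R1 R2)) (zd_comp_adj (RDirProd R1 R2))"
  interpret A: cring R1 by fact
  interpret B: cring R2 by fact
  have "graph_diam (zd_graph_verts R1) (zd_adj R1) \<noteq> 0" using assms(9) by auto
  then have "zd_graph_verts R1 \<noteq> {}" by (rule diam_nonempty)
  then obtain m n where m: "m \<in> carrier R1" "m \<noteq> \<zero>\<^bsub>R1\<^esub>" "n \<in> carrier R1" "n \<noteq> \<zero>\<^bsub>R1\<^esub>"
      "m \<otimes>\<^bsub>R1\<^esub> n = \<zero>\<^bsub>R1\<^esub>"
    unfolding zd_graph_verts_def zero_divisors_def by blast
  have "graph_diam (zd_graph_verts R2) (zd_adj R2) \<noteq> 0" using assms(10) by auto
  then have "zd_graph_verts R2 \<noteq> {}" by (rule diam_nonempty)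
  then obtain x w where x: "x \<in> carrier R2" "x \<noteq> \<zero>\<^bsub>R2\<^esub>" "w \<in> carrier R2" "w \<noteq> \<zero>\<^bsub>R2\<^esub>"
      "x \<otimes>\<^bsub>R2\<^esub> w = \<zero>\<^bsub>R2\<^esub>"
    unfolding zd_graph_verts_def zero_divisors_def by blast
  have o1: "\<one>\<^bsub>R1\<^esub> \<noteq> \<zero>\<^bsub>R1\<^esub>" using m by (metis A.r_one A.r_null)
  have o2: "\<one>\<^bsub>R2\<^esub> \<noteq> \<zero>\<^bsub>R2\<^esub>" using x by (metis B.r_one B.r_null)
  have m1: "m \<noteq> \<one>\<^bsub>R1\<^esub>" "n \<noteq> \<one>\<^bsub>R1\<^esub>" using m by (metis A.l_one A.r_one)+
  have x1: "x \<noteq> \<one>\<^bsub>R2\<^esub>" "w \<noteq> \<one>\<^bsub>R2\<^esub>" using x by (metis B.l_one B.r_one)+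
  note ctx = m x o1 o2 m1 x1
  define P where "P = RDirProd R1 R2"
  define V where "V = zd_graph_verts P"
  obtain f :: "'a \<times> 'b \<Rightarrow> nat" where rel: "\<forall>a\<in>V. \<forall>b\<in>V. a \<noteq> b \<longrightarrow> (zd_comp_adj P a b \<longleftrightarrow> (f a dvd f b \<or> f b dvd f a))"
    using dg unfolding is_divisor_graph_def V_def P_def by blast
  have key: "\<And>a b. a \<in> V \<Longrightarrow> b \<in> V \<Longrightarrow> a \<noteq> b \<Longrightarrow> (f a dvd f b \<or> f b dvd f a) \<longleftrightarrow> zd_comp_adj P a b"
    using rel by blast
  have v0: "(\<one>\<^bsub>R1\<^esub>, x) \<in> V" unfolding V_def P_def
    by (rule inV[where c="fst (\<zero>\<^bsub>R1\<^esub>, w)" and d="snd (\<zero>\<^bsub>R1\<^esub>, w)"]) (use ctx in \<open>auto simp: A.m_comm[of n m] B.m_comm[of w x]\<close>)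
  have v1: "(\<one>\<^bsub>R1\<^esub>, \<zero>\<^bsub>R2\<^esub>) \<in> V" unfolding V_def P_def
    by (rule inV[where c="fst (\<zero>\<^bsub>R1\<^esub>, \<one>\<^bsub>R2\<^esub>)" and d="snd (\<zero>\<^bsub>R1\<^esub>, \<one>\<^bsub>R2\<^esub>)"]) (use ctx in \<open>auto simp: A.m_comm[of n m] B.m_comm[of w x]\<close>)
  have v2: "(m, \<one>\<^bsub>R2\<^esub>) \<in> V" unfolding V_def P_def
    by (rule inV[where c="fst (n, \<zero>\<^bsub>R2\<^esub>)" and d="snd (n, \<zero>\<^bsub>R2\<^esub>)"]) (use ctx in \<open>auto simp: A.m_comm[of n m] B.m_comm[of w x]\<close>)
  have v3: "(m, x) \<in> V" unfolding V_def P_def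
    by (rule inV[where c="fst (n, \<zero>\<^bsub>R2\<^esub>)" and d="snd (n, \<zero>\<^bsub>R2\<^esub>)"]) (use ctx in \<open>auto simp: A.m_comm[of n m] B.m_comm[of w x]\<close>)
  have v4: "(n, \<zero>\<^bsub>R2\<^esub>) \<in> V" unfolding V_def P_def
    by (rule inV[where c="fst (m, \<zero>\<^bsub>R2\<^esub>)" and d="snd (m, \<zero>\<^bsub>R2\<^esub>)"]) (use ctx in \<open>auto simp: A.m_comm[of n m] B.m_comm[of w x]\<close>)
  have v5: "(\<zero>\<^bsub>R1\<^esub>, \<one>\<^bsub>R2\<^esub>) \<in> V" unfolding V_def P_def
    by (rule inV[where c="fst (\<one>\<^bsub>R1\<^esub>, \<zero>\<^bsub>R2\<^esub>)" and d="snd (\<one>\<^bsub>R1\<^esub>, \<zero>\<^bsub>R2\<^esub>)"]) (use ctx in \<open>auto simp: A.m_comm[of n m] B.m_comm[of w x]\<close>)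
  have v6: "(\<zero>\<^bsub>R1\<^esub>, w) \<in> V" unfolding V_def P_def
    by (rule inV[where c="fst (\<zero>\<^bsub>R1\<^esub>, x)" and d="snd (\<zero>\<^bsub>R1\<^esub>, x)"]) (use ctx in \<open>auto simp: A.m_comm[of n m] B.m_comm[of w x]\<close>)
  have e01: "f (\<one>\<^bsub>R1\<^esub>, x) dvd f (\<one>\<^bsub>R1\<^esub>, \<zero>\<^bsub>R2\<^esub>) \<or> f (\<one>\<^bsub>R1\<^esub>, \<zero>\<^bsub>R2\<^esub>) dvd f (\<one>\<^bsub>R1\<^esub>, x)"
    by (subst key[OF v0 v1]; use ctx in \<open>auto simp: P_def zd_comp_adj_def RDP_mult RDP_zero\<close>)
  have e02: "f (\<one>\<^bsub>R1\<^esub>, x) dvd f (m, \<one>\<^bsub>R2\<^esub>) \<or> f (m, \<one>\<^bsub>R2\<^esub>) dvd f (\<one>\<^bsub>R1\<^esub>, x)"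
    by (subst key[OF v0 v2]; use ctx in \<open>auto simp: P_def zd_comp_adj_def RDP_mult RDP_zero\<close>)
  have e03: "f (\<one>\<^bsub>R1\<^esub>, x) dvd f (m, x) \<or> f (m, x) dvd f (\<one>\<^bsub>R1\<^esub>, x)"
    by (subst key[OF v0 v3]; use ctx in \<open>auto simp: P_def zd_comp_adj_def RDP_mult RDP_zero\<close>)
  have e04: "f (\<one>\<^bsub>R1\<^esub>, x) dvd f (n, \<zero>\<^bsub>R2\<^esub>) \<or> f (n, \<zero>\<^bsub>R2\<^esub>) dvd f (\<one>\<^bsub>R1\<^esub>, x)"
    by (subst key[OF v0 v4]; use ctx in \<open>auto simp: P_def zd_comp_adj_def RDP_mult RDP_zero\<close>)
  have e05: "f (\<one>\<^bsub>R1\<^esub>, x) dvd f (\<zero>\<^bsub>R1\<^esub>, \<one>\<^bsub>R2\<^esub>) \<or> f (\<zero>\<^bsub>R1\<^esub>, \<one>\<^bsub>R2\<^esub>) dvd f (\<one>\<^bsub>R1\<^esub>, x)"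
    by (subst key[OF v0 v5]; use ctx in \<open>auto simp: P_def zd_comp_adj_def RDP_mult RDP_zero\<close>)
  have e12: "f (\<one>\<^bsub>R1\<^esub>, \<zero>\<^bsub>R2\<^esub>) dvd f (m, \<one>\<^bsub>R2\<^esub>) \<or> f (m, \<one>\<^bsub>R2\<^esub>) dvd f (\<one>\<^bsub>R1\<^esub>, \<zero>\<^bsub>R2\<^esub>)"
    by (subst key[OF v1 v2]; use ctx in \<open>auto simp: P_def zd_comp_adj_def RDP_mult RDP_zero\<close>)
  have e13: "f (\<one>\<^bsub>R1\<^esub>, \<zero>\<^bsub>R2\<^esub>) dvd f (m, x) \<or> f (m, x) dvd f (\<one>\<^bsub>R1\<^esub>, \<zero>\<^bsub>R2\<^esub>)"
    by (subst key[OF v1 v3]; use ctx in \<open>auto simp: P_def zd_comp_adj_def RDP_mult RDP_zero\<close>)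
  have e14: "f (\<one>\<^bsub>R1\<^esub>, \<zero>\<^bsub>R2\<^esub>) dvd f (n, \<zero>\<^bsub>R2\<^esub>) \<or> f (n, \<zero>\<^bsub>R2\<^esub>) dvd f (\<one>\<^bsub>R1\<^esub>, \<zero>\<^bsub>R2\<^esub>)"
    by (subst key[OF v1 v4]; use ctx in \<open>auto simp: P_def zd_comp_adj_def RDP_mult RDP_zero\<close>)
  have e23: "f (m, \<one>\<^bsub>R2\<^esub>) dvd f (m, x) \<or> f (m, x) dvd f (m, \<one>\<^bsub>R2\<^esub>)"
    by (subst key[OF v2 v3]; use ctx in \<open>auto simp: P_def zd_comp_adj_def RDP_mult RDP_zero\<close>)
  have e25: "f (m, \<one>\<^bsub>R2\<^esub>) dvd f (\<zero>\<^bsub>R1\<^esub>, \<one>\<^bsub>R2\<^esub>) \<or> f (\<zero>\<^bsub>R1\<^esub>, \<one>\<^bsub>R2\<^esub>) dvd f (m, \<one>\<^bsub>R2\<^esub>)"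
    by (subst key[OF v2 v5]; use ctx in \<open>auto simp: P_def zd_comp_adj_def RDP_mult RDP_zero\<close>)
  have e26: "f (m, \<one>\<^bsub>R2\<^esub>) dvd f (\<zero>\<^bsub>R1\<^esub>, w) \<or> f (\<zero>\<^bsub>R1\<^esub>, w) dvd f (m, \<one>\<^bsub>R2\<^esub>)"
    by (subst key[OF v2 v6]; use ctx in \<open>auto simp: P_def zd_comp_adj_def RDP_mult RDP_zero\<close>)
  have e35: "f (m, x) dvd f (\<zero>\<^bsub>R1\<^esub>, \<one>\<^bsub>R2\<^esub>) \<or> f (\<zero>\<^bsub>R1\<^esub>, \<one>\<^bsub>R2\<^esub>) dvd f (m, x)"
    by (subst key[OF v3 v5]; use ctx in \<open>auto simp: P_def zd_comp_adj_def RDP_mult RDP_zero\<close>)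
  have e56: "f (\<zero>\<^bsub>R1\<^esub>, \<one>\<^bsub>R2\<^esub>) dvd f (\<zero>\<^bsub>R1\<^esub>, w) \<or> f (\<zero>\<^bsub>R1\<^esub>, w) dvd f (\<zero>\<^bsub>R1\<^esub>, \<one>\<^bsub>R2\<^esub>)"
    by (subst key[OF v5 v6]; use ctx in \<open>auto simp: P_def zd_comp_adj_def RDP_mult RDP_zero\<close>)
  have n06: "\<not> (f (\<one>\<^bsub>R1\<^esub>, x) dvd f (\<zero>\<^bsub>R1\<^esub>, w) \<or> f (\<zero>\<^bsub>R1\<^esub>, w) dvd f (\<one>\<^bsub>R1\<^esub>, x))"
    by (subst key[OF v0 v6]; use ctx in \<open>auto simp: P_def zd_comp_adj_def RDP_mult RDP_zero A.m_comm[of n m] B.m_comm[of w x]\<close>)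
  have n15: "\<not> (f (\<one>\<^bsub>R1\<^esub>, \<zero>\<^bsub>R2\<^esub>) dvd f (\<zero>\<^bsub>R1\<^esub>, \<one>\<^bsub>R2\<^esub>) \<or> f (\<zero>\<^bsub>R1\<^esub>, \<one>\<^bsub>R2\<^esub>) dvd f (\<one>\<^bsub>R1\<^esub>, \<zero>\<^bsub>R2\<^esub>))"
    by (subst key[OF v1 v5]; use ctx in \<open>auto simp: P_def zd_comp_adj_def RDP_mult RDP_zero A.m_comm[of n m] B.m_comm[of w x]\<close>)
  have n16: "\<not> (f (\<one>\<^bsub>R1\<^esub>, \<zero>\<^bsub>R2\<^esub>) dvd f (\<zero>\<^bsub>R1\<^esub>, w) \<or> f (\<zero>\<^bsub>R1\<^esub>, w) dvd f (\<one>\<^bsub>R1\<^esub>, \<zero>\<^bsub>R2\<^esub>))"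
    by (subst key[OF v1 v6]; use ctx in \<open>auto simp: P_def zd_comp_adj_def RDP_mult RDP_zero A.m_comm[of n m] B.m_comm[of w x]\<close>)
  have n24: "\<not> (f (m, \<one>\<^bsub>R2\<^esub>) dvd f (n, \<zero>\<^bsub>R2\<^esub>) \<or> f (n, \<zero>\<^bsub>R2\<^esub>) dvd f (m, \<one>\<^bsub>R2\<^esub>))"
    by (subst key[OF v2 v4]; use ctx in \<open>auto simp: P_def zd_comp_adj_def RDP_mult RDP_zero A.m_comm[of n m] B.m_comm[of w x]\<close>)
  have n34: "\<not> (f (m, x) dvd f (n, \<zero>\<^bsub>R2\<^esub>) \<or> f (n, \<zero>\<^bsub>R2\<^esub>) dvd f (m, x))"
    by (subst key[OF v3 v4]; use ctx in \<open>auto simp: P_def zd_comp_adj_def RDP_mult RDP_zero A.m_comm[of n m] B.m_comm[of w x]\<close>)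
  have n36: "\<not> (f (m, x) dvd f (\<zero>\<^bsub>R1\<^esub>, w) \<or> f (\<zero>\<^bsub>R1\<^esub>, w) dvd f (m, x))"
    by (subst key[OF v3 v6]; use ctx in \<open>auto simp: P_def zd_comp_adj_def RDP_mult RDP_zero A.m_comm[of n m] B.m_comm[of w x]\<close>)
  have n45: "\<not> (f (n, \<zero>\<^bsub>R2\<^esub>) dvd f (\<zero>\<^bsub>R1\<^esub>, \<one>\<^bsub>R2\<^esub>) \<or> f (\<zero>\<^bsub>R1\<^esub>, \<one>\<^bsub>R2\<^esub>) dvd f (n, \<zero>\<^bsub>R2\<^esub>))"
    by (subst key[OF v4 v5]; use ctx in \<open>auto simp: P_def zd_comp_adj_def RDP_mult RDP_zero A.m_comm[of n m] B.m_comm[of w x]\<close>)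
  have n46: "\<not> (f (n, \<zero>\<^bsub>R2\<^esub>) dvd f (\<zero>\<^bsub>R1\<^esub>, w) \<or> f (\<zero>\<^bsub>R1\<^esub>, w) dvd f (n, \<zero>\<^bsub>R2\<^esub>))"
    by (subst key[OF v4 v6]; use ctx in \<open>auto simp: P_def zd_comp_adj_def RDP_mult RDP_zero A.m_comm[of n m] B.m_comm[of w x]\<close>)
  show False using obstr[OF e01 e02 e03 e04 e05 e12 e13 e14 e23 e25 e26 e35 e56 n06 n15 n16 n24 n34 n36 n45 n46] .
qed

end
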